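(* Consider a draft tree generated by Greedy sampling with the acceptance probabilities produced by the UniVer Allocation Phase (defined in the context). Then the tree is locally lossless: for every non-leaf node $v$ and every $t\in\Sigma$, $$\mathbb{E}_{\mathcal{C}(v)}\big[p_v(t)\big]=\tilde p_v\,\mathcal{M}_b(t\mid v),$$ where the expectation is over the randomness of generating the children set $\mathcal{C}(v)$ (i.e. over $u_m\sim\mathcal{M}_s^\neg(\cdot\mid v)$), with $v$ and $\tilde p_v$ fixed.
   Context: Let $\Sigma$ be a finite vocabulary; $\mathcal{M}_b(\cdot\mid x)$ (target) and $\mathcal{M}_s(\cdot\mid x)$ (draft) are conditional distributions on $\Sigma$ for every context $x$. $[x]_+=\max\{x,0\}$. Draft tree: fixed rooted topology (root $r$, representing the current context); each non-root node carries a token and is identified with the token sequence on the path from $r$; $\mathcal{M}_b(\cdot\mid v),\mathcal{M}_s(\cdot\mid v)$ condition on that sequence. Greedy sampling, top-down: a non-leaf $v$ with $m$ children has children $\mathcal{C}(v)=\{u_1,\dots,u_m\}$, where $u_1,\dots,u_{m-1}$ are the $m-1$ most probable tokens under $\mathcal{M}_s(\cdot\mid v)$ (set $H_v$, ties broken by a fixed rule) and $u_m\sim\mathcal{M}_s^\neg(\cdot\mid v)$, with $\mathcal{M}_s^\neg(x\mid v)=\mathcal{M}_s(x\mid v)/\sum_{y\notin H_v}\mathcal{M}_s(y\mid v)$ for $x\notin H_v$ and $0$ for $x\in H_v$. UniVer Allocation Phase: $\tilde p_r=1$; top-down, for each non-leaf $v$ with computed $\tilde p_v\in[0,1]$: $Z_v=1-\tilde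 p_v+\sum_{x\in\Sigma}[\tilde p_v\mathcal{M}_b(x\mid v)-\mathcal{M}_s^\neg(x\mid v)]_+$; $p_v(u_m)=\min\{1,\tilde p_v\mathcal{M}_b(u_m\mid v)/\mathcal{M}_s^\neg(u_m\mid v)\}$; for every $u\in\Sigma\setminus\{u_m\}$, $p_v(u)=[\tilde p_v\mathcal{M}_b(u\mid v)-\mathcal{M}_s^\neg(u\mid v)]_+(1-p_v(u_m))/Z_v$; then $\tilde p_{u_j}=p_v(u_j)/(1-\sum_{i<j}p_v(u_i))$ for $j=1,\dots,m$. *)

theory Defs
  imports Complex_Main
begin

definition pos_part :: "real \<Rightarrow> real" where
  "pos_part x = max x 0"

definition is_dist :: "('a::finite \<Rightarrow> real) \<Rightarrow> bool" where
  "is_dist P \<longleftrightarrow> (\<forall>x. 0 \<le> P x) \<and> (\<Sum>x\<in>UNIV. P x) = 1"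

text \<open>H is a set of k most probable tokens under P (any fixed tie-breaking rule
  yields such a set).\<close>
definition top_set :: "('a::finite \<Rightarrow> real) \<Rightarrow> nat \<Rightarrow> 'a set \<Rightarrow> bool" where
  "top_set P k H \<longleftrightarrow> card H = k \<and> (\<forall>x\<in>H. \<forall>y. y \<notin> H \<longrightarrow> P y \<le> P x)"

definition Ms_neg :: "('a::finite \<Rightarrow> real) \<Rightarrow> 'a set \<Rightarrow> 'a \<Rightarrow> real" where
  "Ms_neg P H x = (if x \<in> H then 0 else P x / (\<Sum>y\<in>-H. P y))"

text \<open>Normaliser Z_v, with q = M_b(.|v), r = M_s^neg(.|v), pt = tilde p_v.\<close>
definition univer_Z :: "real \<Rightarrow> ('a::finite \<Rightarrow> real) \<Rightarrow> ('a \<Rightarrow> real) \<Rightarrow> real" where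
  "univer_Z pt q r = 1 - pt + (\<Sum>x\<in>UNIV. pos_part (pt * q x - r x))"

text \<open>UniVer acceptance probability p_v(u) given the sampled last child u_m = um.\<close>
definition univer_p :: "real \<Rightarrow> ('a::finite \<Rightarrow> real) \<Rightarrow> ('a \<Rightarrow> real) \<Rightarrow> 'a \<Rightarrow> 'a \<Rightarrow> real" where
  "univer_p pt q r um u =
     (let pum = min 1 (pt * q um / r um)
      in if u = um then pum
         else pos_part (pt * q u - r u) * (1 - pum) / univer_Z pt q r)"

end

theory Submission
  imports Defs
begin

lemma key:
  fixes q r :: "'a::finite \<Rightarrow> real"
  assumes q0: "\<And>x. 0 \<le> q x" and q1: "(\<Sum>x\<in>UNIV. q x) = 1"
    and r0: "\<And>x. 0 \<le> r x" and r1: "(\<Sum>x\<in>UNIV. r x) = 1"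
    and pt0: "0 \<le> pt" and pt1: "pt \<le> 1"
  shows "(\<Sum>um\<in>UNIV. r um * univer_p pt q r um t) = pt * q t"
proof -
  define Z where "Z = univer_Z pt q r"
  define d where "d um = pos_part (r um - pt * q um)" for um
  define e where "e um = pos_part (pt * q um - r um)" for um
  have dm: "r um * (1 - min 1 (pt * q um / r um)) = d um" for um
  proof (cases "r um = 0")
    case True then show ?thesis by (simp add: d_def pos_part_def q0 pt0)
  next
    case False
    then have rp: "r um > 0" using r0[of um] by simp
    show ?thesis
    proof (cases "pt * q um \<le> r um")
      case True
      then have "pt * q um / r um \<le> 1" using rp by (simp add: divide_le_eq)
      then show ?thesis using True rp by (simp add: d_def pos_part_def min_def algebra_simps)
    next
      case False
      then have "\<not> pt * q um / r um \<le> 1" using rp by (simp add: divide_le_eq)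
      then show ?thesis using False rp by (simp add: d_def pos_part_def min_def)
    qed
  qed
  have tt: "r t * min 1 (pt * q t / r t) = pt * q t - e t"
  proof (cases "r t = 0")
    case True then show ?thesis using q0[of t] pt0 by (simp add: e_def pos_part_def)
  next
    case False
    then have rp: "r t > 0" using r0[of t] by simp
    show ?thesis
    proof (cases "pt * q t \<le> r t")
      case True
      then have "pt * q t / r t \<le> 1" using rp by (simp add: divide_le_eq)
      then show ?thesis using True rp by (simp add: e_def pos_part_def min_def)
    next
      case False
      then have "\<not> pt * q t / r t \<le> 1" using rp by (simp add: divide_le_eq)
      then show ?thesis using False rp by (simp add: e_def pos_part_def min_def)
    qed
  qed
  have de: "d x - e x = r x - pt * q x" for x by (simp add: d_def e_def pos_part_def)
  have sumd: "(\<Sum>x\<in>UNIV. d x) = Z"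
  proof -
    have "(\<Sum>x\<in>UNIV. d x) - (\<Sum>x\<in>UNIV. e x) = (\<Sum>x\<in>UNIV. r x) - pt * (\<Sum>x\<in>UNIV. q x)"
      by (simp add: de sum_subtractf[symmetric] sum_distrib_left)
    then show ?thesis using q1 r1 by (simp add: Z_def univer_Z_def e_def)
  qed
  have edt: "e t * d t = 0" by (simp add: d_def e_def pos_part_def max_def)
  have e0: "0 \<le> e x" for x by (simp add: e_def pos_part_def)
  have Zz: "Z = 0 \<Longrightarrow> e t = 0"
  proof -
    assume "Z = 0"
    then have "(\<Sum>x\<in>UNIV. e x) = pt - 1" by (simp add: Z_def univer_Z_def e_def)
    moreover have "e t \<le> (\<Sum>x\<in>UNIV. e x)" by (rule member_le_sum) (auto simp: e0)
    ultimately show ?thesis using pt1 e0[of t] by linarith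
  qed
  have other: "r um * univer_p pt q r um t = e t / Z * d um" if "um \<noteq> t" for um
  proof -
    have "r um * univer_p pt q r um t = e t * (r um * (1 - min 1 (pt * q um / r um))) / Z"
      using that by (simp add: univer_p_def Let_def Z_def e_def)
    then show ?thesis by (simp add: dm)
  qed
  have "(\<Sum>um\<in>UNIV. r um * univer_p pt q r um t)
      = r t * univer_p pt q r t t + (\<Sum>um\<in>UNIV-{t}. r um * univer_p pt q r um t)"
    by (simp add: sum.remove)
  also have "(\<Sum>um\<in>UNIV-{t}. r um * univer_p pt q r um t) = (\<Sum>um\<in>UNIV-{t}. e t / Z * d um)"
    by (rule sum.cong) (auto simp: other)
  also have "\<dots> = e t / Z * ((\<Sum>um\<in>UNIV. d um) - d t)"
    by (simp only: sum_distrib_left[symmetric] sum_diff1 finite UNIV_I if_True)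
  also have "\<dots> = e t / Z * Z - e t * d t / Z" by (simp only: sumd right_diff_distrib times_divide_eq_left)
  also have "\<dots> = e t" using Zz edt by (cases "Z = 0") auto
  finally show ?thesis using tt by (simp add: univer_p_def Let_def)
qed

theorem theorem3:
  fixes Mb Ms :: "'a::finite list \<Rightarrow> 'a \<Rightarrow> real"
    and v :: "'a list" and m :: nat and H :: "'a set" and pt :: real and t :: 'a
  assumes "\<forall>c. is_dist (Mb c)"
    and "\<forall>c. is_dist (Ms c)"
    and "1 \<le> m"
    and "top_set (Ms v) (m - 1) H"
    and "(\<Sum>y\<in>-H. Ms v y) > 0"
    and "0 \<le> pt" and "pt \<le> 1"
  shows "(\<Sum>um\<in>UNIV. Ms_neg (Ms v) H um * univer_p pt (Mb v) (Ms_neg (Ms v) H) um t)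
         = pt * Mb v t"
proof (rule key)
  show "0 \<le> Mb v x" for x using assms(1) by (simp add: is_dist_def)
  show "(\<Sum>x\<in>UNIV. Mb v x) = 1" using assms(1) by (simp add: is_dist_def)
  show "0 \<le> Ms_neg (Ms v) H x" for x using assms(2,5) by (simp add: is_dist_def Ms_neg_def)
  show "(\<Sum>x\<in>UNIV. Ms_neg (Ms v) H x) = 1"
  proof -
    define s where "s = (\<Sum>y\<in>-H. Ms v y)"
    have "(\<Sum>x\<in>UNIV. Ms_neg (Ms v) H x) = (\<Sum>x\<in>-H. Ms v x / s)"
      by (rule sum.mono_neutral_cong_right) (auto simp: Ms_neg_def s_def)
    also have "\<dots> = 1" using assms(5) by (simp add: sum_divide_distrib[symmetric] s_def)
    finally show ?thesis .
  qed
qed (use assms in auto)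

end
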